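(* Let $q$ be a prime power, $n\ge 6$ even, and $\mathcal{L}$ the Desarguesian $2$-spread of $\mathbb{F}_q^n$. Every $4$-dimensional subspace $U$ of $\mathbb{F}_q^n$ that contains exactly one element of $\mathcal{L}$ is adjacent in the Grassmann graph $J_q(n,4)$ to exactly $q+1$ four-dimensional subspaces containing $q^2+1$ elements of $\mathcal{L}$.
   Context: Identify $\mathbb{F}_q^n$ with $\mathbb{F}_{q^n}$, $n$ even, and let $F'=\mathbb{F}_{q^2}$ be its subfield of order $q^2$. The Desarguesian $2$-spread $\mathcal{L}$ is the set of $2$-dimensional $\mathbb{F}_q$-subspaces $F'x=\{\lambda x:\lambda\in F'\}$, $x\ne0$. The Grassmann graph $J_q(n,k)$ has as vertices the $k$-dimensional subspaces of $\mathbb{F}_q^n$, adjacent iff they meet in a $(k-1)$-dimensional subspace. *)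

theory Defs
  imports "HOL-Computational_Algebra.Primes"
begin

text \<open>We identify F_q^n with the finite field 'a of order q^n.  The prime subfield
  F_q is the set of roots of x^q - x, and F_{q^2} the set of roots of x^(q^2) - x.\<close>

definition Fq :: "nat \<Rightarrow> 'a::{finite,field} set" where
  "Fq q = {x. x ^ q = x}"

definition Fq2 :: "nat \<Rightarrow> 'a::{finite,field} set" where
  "Fq2 q = {x. x ^ (q^2) = x}"

definition fq_span :: "nat \<Rightarrow> 'a::{finite,field} list \<Rightarrow> 'a set" where
  "fq_span q vs = {(\<Sum>i<length vs. c i * vs ! i) | c. \<forall>i<length vs. c i \<in> Fq q}"

definition fq_indep :: "nat \<Rightarrow> 'a::{finite,field} list \<Rightarrow> bool" where
  "fq_indep q vs \<longleftrightarrow> (\<forall>c. (\<forall>i<length vs. c i \<in> Fq q) \<longrightarrow>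
      (\<Sum>i<length vs. c i * vs ! i) = 0 \<longrightarrow> (\<forall>i<length vs. c i = 0))"

definition fq_subspace_dim :: "nat \<Rightarrow> 'a::{finite,field} set \<Rightarrow> nat \<Rightarrow> bool" where
  "fq_subspace_dim q U k \<longleftrightarrow>
     (\<exists>vs. length vs = k \<and> fq_indep q vs \<and> fq_span q vs = U)"

definition desarg_spread :: "nat \<Rightarrow> 'a::{finite,field} set set" where
  "desarg_spread q = {{l * x | l. l \<in> Fq2 q} | x. x \<noteq> 0}"

definition grassmann_adj :: "nat \<Rightarrow> nat \<Rightarrow> 'a::{finite,field} set \<Rightarrow> 'a set \<Rightarrow> bool" where
  "grassmann_adj q k U W \<longleftrightarrow> fq_subspace_dim q U k \<and> fq_subspace_dim q W k \<and>
     fq_subspace_dim q (U \<inter> W) (k - 1)"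

definition spread_count :: "nat \<Rightarrow> 'a::{finite,field} set \<Rightarrow> nat" where
  "spread_count q U = card {S \<in> desarg_spread q. S \<subseteq> U}"

end

theory Submission
  imports Defs "HOL-Computational_Algebra.Polynomial" "HOL-Library.FuncSet"
begin


lemma of_nat_card_zero: "of_nat (card (UNIV::'a::{finite,field} set)) = (0::'a)"
proof -
  have "(\<Sum>y\<in>(UNIV::'a set). y + 1) = (\<Sum>y\<in>UNIV. y)"
    by (rule sum.reindex_bij_witness[of _ "\<lambda>y. y - 1" "\<lambda>y. y + 1"]) auto
  hence "(\<Sum>y\<in>(UNIV::'a set). y) + of_nat (card (UNIV::'a set)) = (\<Sum>y\<in>UNIV. y)"
    by (simp add: sum.distrib)
  thus ?thesis by simp
qed

lemma char_eq:
  assumes "card (UNIV::'a::{finite,field} set) = p ^ j" "prime p" "j > 0"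
  shows "CHAR('a) = p"
proof -
  have pos: "CHAR('a) > 0" by (rule finite_imp_CHAR_pos) simp
  have pr: "prime CHAR('a)" using prime_CHAR_semidom[OF pos] .
  have "CHAR('a) dvd card (UNIV::'a set)"
    using of_nat_card_zero[where 'a='a] of_nat_eq_0_iff_char_dvd by blast
  hence "CHAR('a) dvd p ^ j" using assms(1) by simp
  hence "CHAR('a) dvd p" using pr prime_dvd_power by blast
  thus ?thesis using pr assms(2) primes_dvd_imp_eq by blast
qed

lemma pow_card_same:
  fixes x :: "'a :: {finite,field}"
  shows   "x ^ card (UNIV :: 'a set) = x"
proof (cases "x = 0")
  case False
  have "x * (\<Prod>y\<in>UNIV-{0}. x * y) = x * x ^ (card (UNIV :: 'a set) - 1) * \<Prod>(UNIV-{0})"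
    by (simp add: prod.distrib mult_ac)
  also have "x * x ^ (card (UNIV :: 'a set) - 1) = x ^ Suc (card (UNIV :: 'a set) - 1)"
    by (subst power_Suc) auto
  also have "Suc (card (UNIV :: 'a set) - 1) = card (UNIV :: 'a set)"
    using finite_UNIV_card_ge_0[where ?'a = 'a] by simp
  also have "(\<Prod>y\<in>UNIV-{0}. x * y) = (\<Prod>y\<in>UNIV-{0}. y)"
    by (rule prod.reindex_bij_witness[of _ "\<lambda>y. y / x" "\<lambda>y. x * y"]) (use False in auto)
  finally show ?thesis
    by simp
qed (use finite_UNIV_card_ge_0[where ?'a = 'a] in auto)

locale ffq =
  fixes p j m :: nat and Q :: nat and T :: "'a::{finite,field} itself"
  assumes pr: "prime p" and j: "j > 0" and m: "m > 0" and Qdef: "Q = p ^ j"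
    and card: "card (UNIV::'a set) = Q ^ m"
begin

lemma char: "CHAR('a) = p"
  using char_eq[of p "j*m"] card Qdef pr j m by (simp add: power_mult)

lemma Q2: "Q \<ge> 2"
proof -
  have "p \<ge> 2" using pr prime_ge_2_nat by blast
  moreover have "p \<le> p ^ j" using j \<open>p \<ge> 2\<close> by (simp add: self_le_power)
  ultimately show ?thesis using Qdef by simp
qed

lemma frob_add: "((x::'a) + y) ^ (p ^ e) = x ^ (p ^ e) + y ^ (p ^ e)"
  by (rule freshmans_dream') (use char pr in auto)

lemma frob_diff: "((x::'a) - y) ^ (p ^ e) = x ^ (p ^ e) - y ^ (p ^ e)"
proof -
  have "x ^ (p ^ e) = ((x - y) + y) ^ (p ^ e)" by simp
  also have "\<dots> = (x - y) ^ (p ^ e) + y ^ (p ^ e)" by (rule frob_add)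
  finally show ?thesis by (simp add: algebra_simps)
qed

lemma frobQ_add: "((x::'a) + y) ^ (Q ^ i) = x ^ (Q ^ i) + y ^ (Q ^ i)"
  using frob_add[of x y "j*i"] by (simp add: Qdef power_mult)

lemma frobQ_diff: "((x::'a) - y) ^ (Q ^ i) = x ^ (Q ^ i) - y ^ (Q ^ i)"
  using frob_diff[of x y "j*i"] by (simp add: Qdef power_mult)

definition F :: "'a set" where "F = {x. x ^ Q = x}"

lemma card_F_le: "card F \<le> Q"
proof -
  define P :: "'a poly" where "P = monom 1 Q - [:0,1:]"
  have ev: "poly P x = x ^ Q - x" for x by (simp add: P_def poly_monom)
  have "coeff [:0,1::'a:] Q = 0" using Q2 by (intro coeff_eq_0) auto
  hence "coeff P Q = 1" by (simp add: P_def coeff_monom)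
  hence "P \<noteq> 0" by auto
  have "degree P \<le> Q"
    unfolding P_def using Q2
    by (intro degree_diff_le) (auto simp: degree_monom_le intro: order.trans[OF degree_monom_le])
  moreover have "F = {x. poly P x = 0}" by (auto simp: F_def ev)
  ultimately show ?thesis using card_poly_roots_bound[OF \<open>P \<noteq> 0\<close>] by simp
qed

lemma powQm: "(x::'a) ^ (Q ^ m) = x"
  using pow_card_same[of x] card by simp

definition f :: "'a \<Rightarrow> 'a" where "f x = x ^ Q - x"

lemma f_add: "f (x + y) = f x + f y"
  using frobQ_add[of x y 1] by (simp add: f_def)

lemma f_diff: "f (x - y) = f x - f y"
  using frobQ_diff[of x y 1] by (simp add: f_def)

lemma F_iff: "x \<in> F \<longleftrightarrow> f x = 0"
  by (simp add: F_def f_def)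

lemma card_fiber: assumes "c \<in> range f" shows "card (f -` {c}) = card F"
proof -
  obtain x0 where x0: "f x0 = c" using assms by auto
  have "bij_betw (\<lambda>z. x0 + z) F (f -` {c})"
    by (rule bij_betw_byWitness[of _ "\<lambda>x. x - x0"]) (auto simp: F_iff f_add f_diff x0)
  from bij_betw_same_card[OF this] show ?thesis by simp
qed

lemma card_range_f: "card (range f) \<le> Q ^ (m - 1)"
proof -
  define G :: "'a poly" where "G = (\<Sum>i<m. monom 1 (Q ^ i))"
  have ev: "poly G y = (\<Sum>i<m. y ^ (Q ^ i))" for y by (simp add: G_def poly_sum poly_monom)
  have inj: "Q ^ i = Q ^ k \<longleftrightarrow> i = k" for i k using Q2 by (simp add: power_inject_exp)
  have "coeff G (Q ^ (m - 1)) = (\<Sum>i<m. if i = m - 1 then 1 else 0)"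
    unfolding G_def coeff_sum coeff_monom by (intro sum.cong) (auto simp: inj)
  also have "\<dots> = 1" using m by simp
  finally have "G \<noteq> 0" by auto
  have "degree G \<le> Q ^ (m - 1)"
  proof (rule degree_le, intro allI impI)
    fix k assume k: "Q ^ (m - 1) < k"
    have "Q ^ i \<noteq> k" if "i < m" for i
    proof -
      have "Q ^ i \<le> Q ^ (m - 1)" using that Q2 by (intro power_increasing) auto
      thus ?thesis using k by auto
    qed
    thus "coeff G k = 0" unfolding G_def coeff_sum coeff_monom by (intro sum.neutral) auto
  qed
  have "range f \<subseteq> {y. poly G y = 0}"
  proof safe
    fix x
    have "poly G (f x) = (\<Sum>i<m. x ^ (Q ^ Suc i) - x ^ (Q ^ i))"
      unfolding ev f_def frobQ_diff by (intro sum.cong) (auto simp: power_mult[symmetric] mult.commute)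
    also have "\<dots> = x ^ (Q ^ m) - x ^ (Q ^ 0)" by (rule sum_lessThan_telescope)
    finally show "poly G (f x) = 0" by (simp add: powQm)
  qed
  hence "card (range f) \<le> card {y. poly G y = 0}" by (intro card_mono) auto
  also have "\<dots> \<le> degree G" by (rule card_poly_roots_bound[OF \<open>G \<noteq> 0\<close>])
  finally show ?thesis using \<open>degree G \<le> _\<close> by simp
qed

lemma card_F: "card F = Q"
proof -
  have eq: "UNIV = (\<Union>c\<in>range f. f -` {c})" by auto
  have "card (\<Union>c\<in>range f. f -` {c}) = (\<Sum>c\<in>range f. card (f -` {c}))"
    by (rule card_UN_disjoint) auto
  hence "card (UNIV::'a set) = (\<Sum>c\<in>range f. card (f -` {c}))"
    by (simp only: eq[symmetric])
  also have "\<dots> = card (range f) * card F" using card_fiber by simp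
  finally have "Q ^ m = card (range f) * card F" using card by simp
  also have "\<dots> \<le> Q ^ (m - 1) * card F" using card_range_f by simp
  finally have "Q * Q ^ (m - 1) \<le> Q ^ (m - 1) * card F" using m
    by (metis Suc_diff_1 power_Suc)
  hence "Q \<le> card F" using Q2 by simp
  thus ?thesis using card_F_le by simp
qed

lemma F_add: "x \<in> F \<Longrightarrow> y \<in> F \<Longrightarrow> x + y \<in> F"
  using frobQ_add[of x y 1] by (simp add: F_def)
lemma F_diff: "x \<in> F \<Longrightarrow> y \<in> F \<Longrightarrow> x - y \<in> F"
  using frobQ_diff[of x y 1] by (simp add: F_def)
lemma F_mult: "x \<in> F \<Longrightarrow> y \<in> F \<Longrightarrow> x * y \<in> F"
  by (simp add: F_def power_mult_distrib)
lemma F_inverse: "x \<in> F \<Longrightarrow> inverse x \<in> F"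
  by (simp add: F_def power_inverse)
lemma F_0: "0 \<in> F" using Q2 by (simp add: F_def)
lemma F_1: "1 \<in> F" by (simp add: F_def)
lemma F_uminus: "x \<in> F \<Longrightarrow> - x \<in> F" using F_diff[OF F_0] by simp

end


definition sfield :: "'a::field set \<Rightarrow> bool" where
  "sfield K \<longleftrightarrow> 0 \<in> K \<and> 1 \<in> K \<and> (\<forall>x\<in>K. \<forall>y\<in>K. x + y \<in> K \<and> x * y \<in> K \<and> x - y \<in> K)
     \<and> (\<forall>x\<in>K. - x \<in> K \<and> inverse x \<in> K)"

definition subsp :: "'a::field set \<Rightarrow> 'a set \<Rightarrow> bool" where
  "subsp K V \<longleftrightarrow> 0 \<in> V \<and> (\<forall>x\<in>V. \<forall>y\<in>V. x + y \<in> V) \<and> (\<forall>c\<in>K. \<forall>x\<in>V. c * x \<in> V)"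

definition spanK :: "'a::field set \<Rightarrow> 'a list \<Rightarrow> 'a set" where
  "spanK K vs = {(\<Sum>i<length vs. c i * vs ! i) | c. \<forall>i<length vs. c i \<in> K}"

definition indepK :: "'a::field set \<Rightarrow> 'a list \<Rightarrow> bool" where
  "indepK K vs \<longleftrightarrow> (\<forall>c. (\<forall>i<length vs. c i \<in> K) \<longrightarrow>
      (\<Sum>i<length vs. c i * vs ! i) = 0 \<longrightarrow> (\<forall>i<length vs. c i = 0))"

lemma indepD:
  assumes "indepK K vs" "\<forall>i<length vs. c i \<in> K" "(\<Sum>i<length vs. c i * vs ! i) = 0" "i < length vs"
  shows "c i = 0"
  using assms unfolding indepK_def by blast

lemma subsp_sum:
  assumes "subsp K V" "finite A" "\<And>i. i \<in> A \<Longrightarrow> g i \<in> V"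
  shows "sum g A \<in> V"
  using assms(2,3) by (induction A rule: finite_induct) (use assms(1) in \<open>auto simp: subsp_def\<close>)

lemma subsp_diff:
  assumes "sfield K" "subsp K V" "x \<in> V" "y \<in> V" shows "x - y \<in> V"
proof -
  have "-1 \<in> K" using assms(1) by (simp add: sfield_def)
  moreover have "\<forall>c\<in>K. \<forall>x\<in>V. c * x \<in> V" "\<forall>x\<in>V. \<forall>y\<in>V. x + y \<in> V"
    using assms(2) by (simp_all add: subsp_def)
  ultimately have "(-1) * y \<in> V" using assms(4) by blast
  hence "- y \<in> V" by simp
  hence "x + (- y) \<in> V" using \<open>\<forall>x\<in>V. \<forall>y\<in>V. x + y \<in> V\<close> assms(3) by blast
  thus ?thesis by simp
qed

lemma span_subsp:
  assumes "sfield K" shows "subsp K (spanK K vs)"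
  unfolding subsp_def
proof (intro conjI ballI)
  show "0 \<in> spanK K vs" unfolding spanK_def
    by (rule CollectI, rule exI[of _ "\<lambda>_. 0"]) (use assms in \<open>auto simp: sfield_def\<close>)
next
  fix x y assume "x \<in> spanK K vs" "y \<in> spanK K vs"
  then obtain c d where c: "x = (\<Sum>i<length vs. c i * vs ! i)" "\<forall>i<length vs. c i \<in> K"
    and d: "y = (\<Sum>i<length vs. d i * vs ! i)" "\<forall>i<length vs. d i \<in> K"
    unfolding spanK_def by blast
  have "x + y = (\<Sum>i<length vs. (c i + d i) * vs ! i)"
    using c d by (simp add: sum.distrib distrib_right)
  moreover have "\<forall>i<length vs. c i + d i \<in> K" using c d assms by (simp add: sfield_def)
  ultimately show "x + y \<in> spanK K vs" unfolding spanK_def mem_Collect_eq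
    by (intro exI[of _ "\<lambda>i. c i + d i"]) simp
next
  fix a x assume a: "a \<in> K" and "x \<in> spanK K vs"
  then obtain c where c: "x = (\<Sum>i<length vs. c i * vs ! i)" "\<forall>i<length vs. c i \<in> K"
    unfolding spanK_def by blast
  have "a * x = (\<Sum>i<length vs. (a * c i) * vs ! i)"
    using c by (simp add: sum_distrib_left mult.assoc)
  moreover have "\<forall>i<length vs. a * c i \<in> K" using c a assms by (simp add: sfield_def)
  ultimately show "a * x \<in> spanK K vs" unfolding spanK_def mem_Collect_eq
    by (intro exI[of _ "\<lambda>i. a * c i"]) simp
qed

lemma span_sub:
  assumes "subsp K V" "set vs \<subseteq> V" shows "spanK K vs \<subseteq> V"
proof
  fix x assume "x \<in> spanK K vs"
  then obtain c where c: "x = (\<Sum>i<length vs. c i * vs ! i)" "\<forall>i<length vs. c i \<in> K"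
    unfolding spanK_def by blast
  show "x \<in> V" unfolding c(1)
  proof (rule subsp_sum[OF assms(1)])
    fix i assume "i \<in> {..<length vs}"
    hence "vs ! i \<in> V" using assms(2) nth_mem by blast
    moreover have "c i \<in> K" using c \<open>i \<in> _\<close> by auto
    ultimately show "c i * vs ! i \<in> V" using assms(1) by (simp add: subsp_def)
  qed simp
qed

lemma card_span:
  assumes "sfield K" "indepK K vs"
  shows "card (spanK K vs) = card K ^ length vs"
proof -
  define n where "n = length vs"
  define \<phi> where "\<phi> c = (\<Sum>i<n. c i * vs ! i)" for c
  define P where "P = PiE {..<n} (\<lambda>_. K)"
  have "spanK K vs = \<phi> ` P"
  proof
    show "spanK K vs \<subseteq> \<phi> ` P"
    proof
      fix x assume "x \<in> spanK K vs"
      then obtain c where c0: "x = (\<Sum>i<length vs. c i * vs ! i)" "\<forall>i<length vs. c i \<in> K"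
        unfolding spanK_def mem_Collect_eq by blast
      have c: "x = \<phi> c" "\<forall>i<n. c i \<in> K" using c0 by (simp_all add: \<phi>_def n_def)
      have m: "restrict c {..<n} \<in> P" using c(2) unfolding P_def by auto
      have e: "x = \<phi> (restrict c {..<n})" unfolding c(1) \<phi>_def by (intro sum.cong) auto
      show "x \<in> \<phi> ` P" by (rule image_eqI[where f=\<phi>, OF e m])
    qed
  next
    show "\<phi> ` P \<subseteq> spanK K vs"
    proof
      fix x assume "x \<in> \<phi> ` P"
      then obtain c where c: "c \<in> P" "x = \<phi> c" by blast
      have "\<forall>i<n. c i \<in> K" using c(1) unfolding P_def by auto
      thus "x \<in> spanK K vs" unfolding spanK_def mem_Collect_eq c(2) \<phi>_def n_def
        by (intro exI[of _ c]) simp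
    qed
  qed
  moreover have "inj_on \<phi> P"
  proof
    fix c d assume cd: "c \<in> P" "d \<in> P" "\<phi> c = \<phi> d"
    have "(\<Sum>i<n. (c i - d i) * vs ! i) = \<phi> c - \<phi> d"
      unfolding \<phi>_def by (simp add: sum_subtractf left_diff_distrib)
    hence "(\<Sum>i<n. (c i - d i) * vs ! i) = 0" using cd by simp
    moreover have "\<forall>i<n. c i - d i \<in> K"
    proof (intro allI impI)
      fix i assume "i < n"
      hence "i \<in> {..<n}" by simp
      hence "c i \<in> K" "d i \<in> K" using cd(1,2) unfolding P_def by (auto intro: PiE_mem)
      thus "c i - d i \<in> K" using assms(1) unfolding sfield_def by blast
    qed
    ultimately have z: "\<forall>i<n. c i - d i = 0"
      using indepD[OF assms(2), of "\<lambda>i. c i - d i"] unfolding n_def by blast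
    have cP: "c \<in> PiE {..<n} (\<lambda>_. K)" "d \<in> PiE {..<n} (\<lambda>_. K)" using cd(1,2) unfolding P_def by simp_all
    show "c = d"
    proof (rule PiE_ext[OF cP])
      fix i assume "i \<in> {..<n}" thus "c i = d i" using z by simp
    qed
  qed
  ultimately have "card (spanK K vs) = card P" by (simp add: card_image)
  also have "\<dots> = card K ^ n" by (simp add: P_def card_PiE)
  finally show ?thesis by (simp add: n_def)
qed

lemma indep_snoc:
  assumes "sfield K" "indepK K vs" "v \<notin> spanK K vs"
  shows "indepK K (vs @ [v])"
  unfolding indepK_def
proof (rule allI, intro impI)
  fix c assume cK: "\<forall>i<length (vs @ [v]). c i \<in> K"
    and s0: "(\<Sum>i<length (vs @ [v]). c i * (vs @ [v]) ! i) = 0"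
  define n where "n = length vs"
  define S where "S = (\<Sum>i<n. c i * vs ! i)"
  have "(\<Sum>i<length (vs @ [v]). c i * (vs @ [v]) ! i) = (\<Sum>i<n. c i * (vs @ [v]) ! i) + c n * (vs @ [v]) ! n"
    by (simp add: n_def)
  also have "(\<Sum>i<n. c i * (vs @ [v]) ! i) = S"
    unfolding S_def by (intro sum.cong) (auto simp: n_def nth_append)
  also have "(vs @ [v]) ! n = v" by (simp add: n_def)
  finally have s: "S + c n * v = 0" using s0 by simp
  have cKn: "\<forall>i<n. c i \<in> K" "c n \<in> K" using cK by (auto simp: n_def)
  have cn: "c n = 0"
  proof (rule ccontr)
    assume ne: "c n \<noteq> 0"
    have e1: "c n * v = - S" using s by (metis add.commute eq_neg_iff_add_eq_0)
    have "v = (c n * v) / c n" using ne by simp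
    also have "\<dots> = - S / c n" using e1 by simp
    also have "\<dots> = (\<Sum>i<n. (- (c i / c n)) * vs ! i)"
    proof -
      have "(\<Sum>i<n. (- (c i / c n)) * vs ! i) = (\<Sum>i<n. - ((c i * vs ! i) / c n))"
        by (intro sum.cong) auto
      also have "\<dots> = - ((\<Sum>i<n. c i * vs ! i) / c n)"
        by (simp only: sum_negf sum_divide_distrib)
      finally show ?thesis by (simp add: S_def)
    qed
    finally have vq: "v = (\<Sum>i<n. (- (c i / c n)) * vs ! i)" .
    have vk: "\<forall>i<n. - (c i / c n) \<in> K"
    proof (intro allI impI)
      fix i assume "i < n"
      hence "c i \<in> K" using cKn by auto
      hence "c i * inverse (c n) \<in> K" using cKn(2) assms(1) unfolding sfield_def by blast
      thus "- (c i / c n) \<in> K" using assms(1) unfolding sfield_def divide_inverse by blast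
    qed
    have "v \<in> spanK K vs" unfolding spanK_def mem_Collect_eq
      by (rule exI[of _ "\<lambda>i. - (c i / c n)"], rule conjI) (use vq vk in \<open>simp_all add: n_def\<close>)
    thus False using assms(3) by simp
  qed
  have "S = 0" using s cn by simp
  hence z: "\<forall>i<n. c i = 0" using indepD[OF assms(2), of c] cKn unfolding n_def S_def by blast
  show "\<forall>i<length (vs @ [v]). c i = 0"
  proof (intro allI impI)
    fix i assume "i < length (vs @ [v])"
    hence "i < n \<or> i = n" by (auto simp: n_def)
    thus "c i = 0" using z cn by blast
  qed
qed

lemma basis_exists:
  fixes V :: "'a::{finite,field} set"
  assumes "sfield K" "subsp K V" "card K \<ge> 2"
  shows "\<exists>vs. indepK K vs \<and> spanK K vs = V"
proof -
  define P where "P m \<longleftrightarrow> (\<exists>vs. length vs = m \<and> indepK K vs \<and> set vs \<subseteq> V)" for m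
  have P0: "P 0" unfolding P_def indepK_def by (rule exI[of _ "[]"]) simp
  have bound: "m \<le> card (UNIV::'a set)" if "P m" for m
  proof -
    obtain vs where vs: "length vs = m" "indepK K vs" using \<open>P m\<close> unfolding P_def by blast
    have "m < 2 ^ m" by (rule less_exp)
    also have "\<dots> \<le> card K ^ m" by (rule power_mono[OF assms(3)]) simp
    also have "\<dots> = card (spanK K vs)" using card_span[OF assms(1) vs(2)] vs(1) by simp
    also have "\<dots> \<le> card (UNIV::'a set)" by (rule card_mono) simp_all
    finally show ?thesis by simp
  qed
  have bd: "\<forall>y. P y \<longrightarrow> y \<le> card (UNIV::'a set)" using bound by blast
  obtain M where M: "P M" "\<And>y. P y \<Longrightarrow> y \<le> M"
    using Nat.ex_has_greatest_nat[OF P0 bd] by blast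
  obtain vs where vs: "length vs = M" "indepK K vs" "set vs \<subseteq> V" using M(1) unfolding P_def by blast
  have sub: "spanK K vs \<subseteq> V" by (rule span_sub[OF assms(2) vs(3)])
  have "spanK K vs = V"
  proof (rule ccontr)
    assume "spanK K vs \<noteq> V"
    then obtain v where v: "v \<in> V" "v \<notin> spanK K vs" using sub by blast
    have "P (Suc M)" unfolding P_def
      by (rule exI[of _ "vs @ [v]"]) (simp add: vs v indep_snoc[OF assms(1) vs(2) v(2)])
    thus False using M(2)[of "Suc M"] by simp
  qed
  thus ?thesis using vs by blast
qed

lemma dim_iff:
  fixes V :: "'a::{finite,field} set"
  assumes "sfield K" "card K = q" "q \<ge> 2"
  shows "(\<exists>vs. length vs = d \<and> indepK K vs \<and> spanK K vs = V) \<longleftrightarrow> subsp K V \<and> card V = q ^ d"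
proof
  assume "\<exists>vs. length vs = d \<and> indepK K vs \<and> spanK K vs = V"
  then obtain vs where vs: "length vs = d" "indepK K vs" "spanK K vs = V" by blast
  show "subsp K V \<and> card V = q ^ d"
    using span_subsp[OF assms(1), of vs] card_span[OF assms(1) vs(2)] vs assms(2) by simp
next
  assume h: "subsp K V \<and> card V = q ^ d"
  obtain vs where vs: "indepK K vs" "spanK K vs = V" using basis_exists[OF assms(1)] h assms by blast
  have "q ^ length vs = q ^ d" using card_span[OF assms(1) vs(1)] vs h assms(2) by simp
  hence "length vs = d" using assms(3) by (simp add: power_inject_exp)
  thus "\<exists>vs. length vs = d \<and> indepK K vs \<and> spanK K vs = V" using vs by blast
qed

lemma card_sumset:
  fixes A B :: "'a::{finite,field} set"
  assumes "\<And>x y. x \<in> A \<Longrightarrow> y \<in> A \<Longrightarrow> x - y \<in> A"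
      and "\<And>x y. x \<in> B \<Longrightarrow> y \<in> B \<Longrightarrow> x - y \<in> B"
      and "A \<inter> B \<subseteq> {0}"
  shows "card {a + b | a b. a \<in> A \<and> b \<in> B} = card A * card B"
proof -
  have eq: "{a + b | a b. a \<in> A \<and> b \<in> B} = (\<lambda>(a, b). a + b) ` (A \<times> B)" by auto
  have "inj_on (\<lambda>(a, b). a + b) (A \<times> B)"
  proof (rule inj_onI, clarify)
    fix a b a' b' assume h: "a \<in> A" "b \<in> B" "a' \<in> A" "b' \<in> B" "a + b = a' + b'"
    have "a - a' = b' - b" using h(5) by (simp add: algebra_simps)
    moreover have "a - a' \<in> A" "b' - b \<in> B" using h assms(1,2) by auto
    ultimately have "a - a' = 0" using assms(3) by auto
    thus "a = a' \<and> b = b'" using h(5) by simp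
  qed
  thus ?thesis unfolding eq by (simp add: card_image card_cartesian_product)
qed

definition line :: "'a::field set \<Rightarrow> 'a \<Rightarrow> 'a set" where
  "line L x = {l * x | l. l \<in> L}"

lemma card_line: "x \<noteq> 0 \<Longrightarrow> card (line L x) = card L"
proof -
  assume "x \<noteq> 0"
  have "line L x = (\<lambda>l. l * x) ` L" by (auto simp: line_def)
  moreover have "inj_on (\<lambda>l. l * x) L" using \<open>x \<noteq> 0\<close> by (auto simp: inj_on_def)
  ultimately show ?thesis by (simp add: card_image)
qed


lemma ar1: "(q::nat) \<ge> 2 \<Longrightarrow> (q^3 - q^2) * (q+1) = q^4 - q^2"
proof -
  assume "q \<ge> 2"
  then obtain r where q: "q = Suc r" by (cases q) auto
  show ?thesis unfolding q by (simp add: algebra_simps power_Suc power2_eq_square power3_eq_cube numeral_eq_Suc)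
qed
lemma ar2: "(q::nat) \<ge> 2 \<Longrightarrow> (q^2 - 1) * (q^2+1) = q^4 - 1"
proof -
  assume "q \<ge> 2"
  then obtain r where q: "q = Suc r" by (cases q) auto
  show ?thesis unfolding q by (simp add: algebra_simps power_Suc power2_eq_square numeral_eq_Suc)
qed


lemma sfD:
  assumes "sfield K"
  shows "0 \<in> K" "1 \<in> K" "\<And>x y. x \<in> K \<Longrightarrow> y \<in> K \<Longrightarrow> x + y \<in> K"
    "\<And>x y. x \<in> K \<Longrightarrow> y \<in> K \<Longrightarrow> x * y \<in> K" "\<And>x y. x \<in> K \<Longrightarrow> y \<in> K \<Longrightarrow> x - y \<in> K"
    "\<And>x. x \<in> K \<Longrightarrow> inverse x \<in> K"
  using assms unfolding sfield_def by blast+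

definition ssum :: "'a::field set \<Rightarrow> 'a set \<Rightarrow> 'a set" where
  "ssum A B = {a + b | a b. a \<in> A \<and> b \<in> B}"

lemma ssumI: "a \<in> A \<Longrightarrow> b \<in> B \<Longrightarrow> a + b \<in> ssum A B"
  unfolding ssum_def by blast

lemma ssumE: "x \<in> ssum A B \<Longrightarrow> (\<And>a b. a \<in> A \<Longrightarrow> b \<in> B \<Longrightarrow> x = a + b \<Longrightarrow> P) \<Longrightarrow> P"
  unfolding ssum_def by blast

lemma ssum_lineE: "x \<in> ssum S (line M y) \<Longrightarrow> (\<And>s l. s \<in> S \<Longrightarrow> l \<in> M \<Longrightarrow> x = s + l * y \<Longrightarrow> P) \<Longrightarrow> P"
  unfolding ssum_def line_def by blast

lemma lineI: "l \<in> L \<Longrightarrow> l * x \<in> line L x"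
  unfolding line_def by blast

lemma lineE: "z \<in> line L x \<Longrightarrow> (\<And>l. l \<in> L \<Longrightarrow> z = l * x \<Longrightarrow> P) \<Longrightarrow> P"
  unfolding line_def by blast

lemma line_mono: "K \<subseteq> L \<Longrightarrow> line K x \<subseteq> line L x"
  unfolding line_def by blast

lemma line_diff: assumes "sfield M" "a \<in> line M y" "b \<in> line M y" shows "a - b \<in> line M y"
proof -
  obtain l m where "l \<in> M" "m \<in> M" "a = l * y" "b = m * y" using assms(2,3) by (blast elim: lineE)
  hence "a - b = (l - m) * y" "l - m \<in> M" using sfD(5)[OF assms(1)] by (auto simp: algebra_simps)
  thus ?thesis by (simp add: lineI)
qed

lemma line_0: "sfield M \<Longrightarrow> 0 \<in> line M y"
  using lineI[OF sfD(1), of M y] by simp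

lemma line_self: "sfield M \<Longrightarrow> y \<in> line M y"
  using lineI[OF sfD(2), of M y] by simp

lemma card_ssum: 
  fixes A B :: "'a::{finite,field} set"
  assumes "\<And>x y. x \<in> A \<Longrightarrow> y \<in> A \<Longrightarrow> x - y \<in> A"
      and "\<And>x y. x \<in> B \<Longrightarrow> y \<in> B \<Longrightarrow> x - y \<in> B"
      and "A \<inter> B \<subseteq> {0}"
  shows "card (ssum A B) = card A * card B"
  unfolding ssum_def by (rule card_sumset[OF assms])

locale geo =
  fixes K L :: "'a::{finite,field} set" and q :: nat
  assumes sK: "sfield K" and sL: "sfield L" and KL: "K \<subseteq> L"
    and cK: "card K = q" and cL: "card L = q ^ 2" and q2: "q \<ge> 2"
begin

definition Lclosed :: "'a set \<Rightarrow> bool" where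
  "Lclosed W \<longleftrightarrow> (\<forall>l\<in>L. \<forall>w\<in>W. l * w \<in> W)"

definition spreadL :: "'a set set" where
  "spreadL = {line L x | x. x \<noteq> 0}"

definition cnt :: "'a set \<Rightarrow> nat" where
  "cnt W = card {S \<in> spreadL. S \<subseteq> W}"

lemma spreadE: "S \<in> spreadL \<Longrightarrow> (\<And>x. x \<noteq> 0 \<Longrightarrow> S = line L x \<Longrightarrow> P) \<Longrightarrow> P"
  unfolding spreadL_def by blast

lemma spreadI: "x \<noteq> 0 \<Longrightarrow> line L x \<in> spreadL"
  unfolding spreadL_def by blast

lemma line_sub: "Lclosed W \<Longrightarrow> x \<in> W \<Longrightarrow> line L x \<subseteq> W"
  unfolding Lclosed_def line_def by blast

lemma line_eq:
  assumes "z \<in> line L x" "z \<noteq> 0" shows "line L z = line L x"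
proof -
  obtain l where l: "l \<in> L" "z = l * x" using assms(1) by (blast elim: lineE)
  have l0: "l \<noteq> 0" using l assms(2) by auto
  show ?thesis
  proof
    show "line L z \<subseteq> line L x"
    proof
      fix w assume "w \<in> line L z"
      then obtain m where "m \<in> L" "w = m * z" by (blast elim: lineE)
      hence "w = (m * l) * x" "m * l \<in> L" using l sfD(4)[OF sL] by (auto simp: mult.assoc)
      thus "w \<in> line L x" by (simp add: lineI)
    qed
  next
    show "line L x \<subseteq> line L z"
    proof
      fix w assume "w \<in> line L x"
      then obtain m where m: "m \<in> L" "w = m * x" by (blast elim: lineE)
      have "w = (m * inverse l) * z" using m l l0 by (simp add: field_simps)
      moreover have "m * inverse l \<in> L" using m l sfD(4,6)[OF sL] by blast
      ultimately show "w \<in> line L z" by (simp add: lineI)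
    qed
  qed
qed

lemma line_Lclosed: "Lclosed (line L x)"
  unfolding Lclosed_def
proof (intro ballI)
  fix c w assume "c \<in> L" "w \<in> line L x"
  then obtain m where m: "m \<in> L" "w = m * x" by (blast elim: lineE)
  have "c * w = (c * m) * x" by (simp add: m(2) mult.assoc)
  moreover have "c * m \<in> L" using \<open>c \<in> L\<close> m(1) sfD(4)[OF sL] by blast
  ultimately show "c * w \<in> line L x" by (metis lineI)
qed

lemma card_lineL: "x \<noteq> 0 \<Longrightarrow> card (line L x) = q ^ 2"
  using card_line[of x L] cL by simp

lemma card_lineK: "x \<noteq> 0 \<Longrightarrow> card (line K x) = q"
  using card_line[of x K] cK by simp

lemma ssum_line_props:
  assumes M: "sfield M" and S0: "0 \<in> S" and Sadd: "\<And>a b. a \<in> S \<Longrightarrow> b \<in> S \<Longrightarrow> a + b \<in> S"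
    and Ssc: "\<And>c a. c \<in> M \<Longrightarrow> a \<in> S \<Longrightarrow> c * a \<in> S"
  shows "0 \<in> ssum S (line M y)"
    "\<And>a b. a \<in> ssum S (line M y) \<Longrightarrow> b \<in> ssum S (line M y) \<Longrightarrow> a + b \<in> ssum S (line M y)"
    "\<And>c a. c \<in> M \<Longrightarrow> a \<in> ssum S (line M y) \<Longrightarrow> c * a \<in> ssum S (line M y)"
    "S \<subseteq> ssum S (line M y)" "line M y \<subseteq> ssum S (line M y)"
proof -
  show "0 \<in> ssum S (line M y)" using ssumI[OF S0 line_0[OF M]] by simp
  show "S \<subseteq> ssum S (line M y)" using ssumI[OF _ line_0[OF M]] by force
  show "line M y \<subseteq> ssum S (line M y)" using ssumI[OF S0] by force
next
  fix a b assume "a \<in> ssum S (line M y)" "b \<in> ssum S (line M y)"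
  then obtain s1 l1 s2 l2 where h: "s1 \<in> S" "l1 \<in> M" "a = s1 + l1 * y" "s2 \<in> S" "l2 \<in> M" "b = s2 + l2 * y"
    by (metis ssum_lineE)
  have "a + b = (s1 + s2) + (l1 + l2) * y" using h by (simp add: algebra_simps)
  moreover have "s1 + s2 \<in> S" "l1 + l2 \<in> M" using h Sadd sfD(3)[OF M] by auto
  ultimately show "a + b \<in> ssum S (line M y)" by (simp add: ssumI lineI)
next
  fix c a assume c: "c \<in> M" and "a \<in> ssum S (line M y)"
  then obtain s1 l1 where h: "s1 \<in> S" "l1 \<in> M" "a = s1 + l1 * y"
    by (metis ssum_lineE)
  have "c * a = (c * s1) + (c * l1) * y" using h by (simp add: algebra_simps)
  moreover have "c * s1 \<in> S" "c * l1 \<in> M" using h c Ssc sfD(4)[OF M] by auto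
  ultimately show "c * a \<in> ssum S (line M y)" by (simp add: ssumI lineI)
qed

lemma subsp_diff': "subsp K V \<Longrightarrow> x \<in> V \<Longrightarrow> y \<in> V \<Longrightarrow> x - y \<in> V"
  using subsp_diff[OF sK] by blast

lemma subsp_add: "subsp K V \<Longrightarrow> x \<in> V \<Longrightarrow> y \<in> V \<Longrightarrow> x + y \<in> V"
  unfolding subsp_def by blast

lemma subsp_scale: "subsp K V \<Longrightarrow> c \<in> K \<Longrightarrow> x \<in> V \<Longrightarrow> c * x \<in> V"
  unfolding subsp_def by blast

lemma subsp_0: "subsp K V \<Longrightarrow> 0 \<in> V"
  unfolding subsp_def by blast

lemma subsp_Int: "subsp K V \<Longrightarrow> subsp K W \<Longrightarrow> subsp K (V \<inter> W)"
  unfolding subsp_def by blast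

lemma line_subspK: "subsp K (line L x)"
  unfolding subsp_def
proof (intro conjI ballI)
  show "0 \<in> line L x" by (rule line_0[OF sL])
next
  fix a b assume "a \<in> line L x" "b \<in> line L x"
  then obtain l m where "l \<in> L" "m \<in> L" "a = l * x" "b = m * x" by (blast elim: lineE)
  hence "a + b = (l + m) * x" "l + m \<in> L" using sfD(3)[OF sL] by (auto simp: algebra_simps)
  thus "a + b \<in> line L x" by (simp add: lineI)
next
  fix c a assume "c \<in> K" "a \<in> line L x"
  thus "c * a \<in> line L x" using line_Lclosed KL unfolding Lclosed_def by blast
qed

lemma q_facts: "q ^ 2 > 0" "q ^ 3 > q ^ 2" "q ^ 4 > q ^ 3" "q ^ 5 > q ^ 4"
  using q2 by (auto intro: power_strict_increasing)

lemma cnt_Lclosed: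
  assumes W: "subsp K W" "Lclosed W" "card W = q ^ 4"
  shows "cnt W = q ^ 2 + 1"
proof -
  define C where "C = {S \<in> spreadL. S \<subseteq> W}"
  define D where "D = (\<lambda>S. S - {0}) ` C"
  have C0: "0 \<in> S" if "S \<in> C" for S
    using that line_0[OF sL] unfolding C_def by (blast elim: spreadE)
  have inj: "inj_on (\<lambda>S. S - {0}) C"
  proof (rule inj_onI)
    fix S1 S2 assume "S1 \<in> C" "S2 \<in> C" "S1 - {0} = S2 - {0}"
    hence "insert 0 (S1 - {0}) = insert 0 (S2 - {0})" by simp
    thus "S1 = S2" using C0[OF \<open>S1 \<in> C\<close>] C0[OF \<open>S2 \<in> C\<close>] by (simp add: insert_absorb)
  qed
  have cardD: "card d = q ^ 2 - 1" if "d \<in> D" for d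
  proof -
    obtain S where S: "S \<in> C" "d = S - {0}" using \<open>d \<in> D\<close> unfolding D_def by blast
    obtain x where x: "x \<noteq> 0" "S = line L x" using S(1) unfolding C_def by (blast elim: spreadE)
    show ?thesis using S x card_Diff_singleton[OF C0[OF S(1)]] card_lineL by simp
  qed
  have disj: "d1 \<inter> d2 = {}" if dd: "d1 \<in> D" "d2 \<in> D" "d1 \<noteq> d2" for d1 d2
  proof (rule ccontr)
    assume "d1 \<inter> d2 \<noteq> {}"
    then obtain z where z: "z \<in> d1" "z \<in> d2" by blast
    obtain S1 S2 where S: "S1 \<in> C" "d1 = S1 - {0}" "S2 \<in> C" "d2 = S2 - {0}"
      using dd unfolding D_def by blast
    obtain x1 where x1: "S1 = line L x1" using S(1) unfolding C_def by (blast elim: spreadE)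
    obtain x2 where x2: "S2 = line L x2" using S(3) unfolding C_def by (blast elim: spreadE)
    have "S1 = line L z" using line_eq[of z x1] z S x1 by auto
    moreover have "S2 = line L z" using line_eq[of z x2] z S x2 by auto
    ultimately show False using dd S by simp
  qed
  have UD: "\<Union>D = W - {0}"
  proof
    show "\<Union>D \<subseteq> W - {0}" unfolding D_def C_def by blast
  next
    show "W - {0} \<subseteq> \<Union>D"
    proof
      fix w assume w: "w \<in> W - {0}"
      have "line L w \<in> C" unfolding C_def using spreadI[of w] line_sub[OF W(2)] w by blast
      moreover have "w \<in> line L w - {0}" using line_self[OF sL] w by blast
      ultimately show "w \<in> \<Union>D" unfolding D_def by blast
    qed
  qed
  have "(q ^ 2 - 1) * card D = card (\<Union>D)"
    by (rule card_partition) (use cardD disj in \<open>auto simp: D_def\<close>)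
  also have "\<dots> = q ^ 4 - 1" unfolding UD using card_Diff_singleton[OF subsp_0[OF W(1)]] W(3) by simp
  also have "\<dots> = (q ^ 2 - 1) * (q ^ 2 + 1)" using ar2[OF q2] by simp
  finally have e: "(q ^ 2 - 1) * card D = (q ^ 2 - 1) * (q ^ 2 + 1)" .
  have "(2::nat) ^ 2 \<le> q ^ 2" using q2 by (rule power_mono) simp
  hence "q ^ 2 - 1 > 0" by simp
  hence "card D = q ^ 2 + 1" using e by (metis mult_left_cancel not_gr0)
  moreover have "card D = card C" unfolding D_def by (rule card_image[OF inj])
  ultimately show ?thesis unfolding cnt_def C_def by simp
qed

lemma cnt_ge2_Lclosed:
  assumes W: "subsp K W" "card W = q ^ 4" "cnt W \<ge> 2"
  shows "Lclosed W"
proof -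
  define C where "C = {S \<in> spreadL. S \<subseteq> W}"
  have "\<not> card C \<le> Suc 0" using W(3) unfolding cnt_def C_def by simp
  then obtain S1 S2 where S: "S1 \<in> C" "S2 \<in> C" "S1 \<noteq> S2"
    using card_le_Suc0_iff_eq[of C] by auto
  obtain a where a: "a \<noteq> 0" "S1 = line L a" using S(1) unfolding C_def by (blast elim: spreadE)
  obtain b where b: "b \<noteq> 0" "S2 = line L b" using S(2) unfolding C_def by (blast elim: spreadE)
  have int: "S1 \<inter> S2 \<subseteq> {0}"
  proof
    fix z assume z: "z \<in> S1 \<inter> S2"
    show "z \<in> {0}"
    proof (rule ccontr)
      assume "z \<notin> {0}"
      hence "line L z = S1" "line L z = S2" using line_eq[of z] z a b by auto
      thus False using S(3) by simp
    qed
  qed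
  have "card (ssum S1 S2) = q ^ 2 * q ^ 2"
    using card_ssum[OF _ _ int] line_diff[OF sL] a b card_lineL by simp
  hence cs: "card (ssum S1 S2) = card W" using W(2) by (simp add: power_add[symmetric])
  have sub: "ssum S1 S2 \<subseteq> W"
  proof
    fix x assume "x \<in> ssum S1 S2"
    then obtain s1 s2 where "s1 \<in> S1" "s2 \<in> S2" "x = s1 + s2" by (blast elim: ssumE)
    moreover have "S1 \<subseteq> W" "S2 \<subseteq> W" using S unfolding C_def by auto
    ultimately show "x \<in> W" using subsp_add[OF W(1)] by blast
  qed
  have eq: "ssum S1 S2 = W" by (rule card_subset_eq[OF _ sub cs]) simp
  have "Lclosed (ssum S1 S2)"
    unfolding Lclosed_def
  proof (intro ballI)
    fix c x assume c: "c \<in> L" and "x \<in> ssum S1 S2"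
    then obtain s1 s2 where h: "s1 \<in> S1" "s2 \<in> S2" "x = s1 + s2" by (blast elim: ssumE)
    have "c * x = c * s1 + c * s2" using h by (simp add: algebra_simps)
    moreover have "c * s1 \<in> S1" "c * s2 \<in> S2" using h c line_Lclosed a b unfolding Lclosed_def by auto
    ultimately show "c * x \<in> ssum S1 S2" by (simp add: ssumI)
  qed
  thus ?thesis using eq by simp
qed

end


context geo
begin

lemma main_count:
  assumes U: "subsp K U" "card U = q ^ 4" "cnt U = 1"
  shows "card {W. (subsp K W \<and> card W = q ^ 4) \<and> (subsp K (U \<inter> W) \<and> card (U \<inter> W) = q ^ 3)
                 \<and> cnt W = q ^ 2 + 1} = q + 1"
proof -
  define G where "G = {W. (subsp K W \<and> card W = q ^ 4) \<and> (subsp K (U \<inter> W) \<and> card (U \<inter> W) = q ^ 3)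
                 \<and> cnt W = q ^ 2 + 1}"
  obtain S where CS: "{S \<in> spreadL. S \<subseteq> U} = {S}"
    using U(3) unfolding cnt_def by (rule card_1_singletonE)
  have SU: "S \<subseteq> U" and Ssp: "S \<in> spreadL" using CS by auto
  have uniq: "S' = S" if "S' \<in> spreadL" "S' \<subseteq> U" for S' using CS that by blast
  obtain x0 where x0: "x0 \<noteq> 0" "S = line L x0" using Ssp by (rule spreadE)
  have S0: "0 \<in> S" unfolding x0(2) by (rule line_0[OF sL])
  have Sadd: "a + b \<in> S" if "a \<in> S" "b \<in> S" for a b
    using that subsp_add[OF line_subspK] unfolding x0(2) by blast
  have SL: "c * a \<in> S" if "c \<in> L" "a \<in> S" for c a
    using that line_Lclosed unfolding x0(2) Lclosed_def by blast
  have SK: "c * a \<in> S" if "c \<in> K" "a \<in> S" for c a using SL that KL by blast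
  have Sdiff: "a - b \<in> S" if "a \<in> S" "b \<in> S" for a b
    using that line_diff[OF sL] unfolding x0(2) by blast
  have cS: "card S = q ^ 2" unfolding x0(2) by (rule card_lineL[OF x0(1)])
  have fin: "finite (A::'a set)" for A by simp
  have notS: "c * y \<notin> S" if "y \<notin> S" "c \<in> L" "c \<noteq> 0" for c y
  proof
    assume "c * y \<in> S"
    hence "inverse c * (c * y) \<in> S" using SL sfD(6)[OF sL] that(2) by blast
    thus False using that by (simp add: mult.assoc[symmetric])
  qed
  have intL: "S \<inter> line L y \<subseteq> {0}" if "y \<notin> S" for y
  proof
    fix z assume z: "z \<in> S \<inter> line L y"
    then obtain c where c: "c \<in> L" "z = c * y" by (blast elim: lineE)
    show "z \<in> {0}"
    proof (cases "c = 0")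
      case True thus ?thesis using c by simp
    next
      case False thus ?thesis using notS[OF that c(1) False] c z by blast
    qed
  qed
  have intK: "S \<inter> line K y \<subseteq> {0}" if "y \<notin> S" for y
    using intL[OF that] line_mono[OF KL, of y] by blast
  have y0: "y \<noteq> 0" if "y \<notin> S" for y using that S0 by blast
  have card_SL: "card (ssum S (line L y)) = q ^ 4" if "y \<notin> S" for y
  proof -
    have "card (ssum S (line L y)) = card S * card (line L y)"
      by (rule card_ssum[OF Sdiff line_diff[OF sL] intL[OF that]])
    thus ?thesis using cS card_lineL[OF y0[OF that]] by (simp add: power_add[symmetric])
  qed
  have card_SK: "card (ssum S (line K y)) = q ^ 3" if "y \<notin> S" for y
  proof -
    have "card (ssum S (line K y)) = card S * card (line K y)"
      by (rule card_ssum[OF Sdiff line_diff[OF sK] intK[OF that]])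
    thus ?thesis using cS card_lineK[OF y0[OF that]] by (simp add: power2_eq_square power3_eq_cube)
  qed
  note PL = ssum_line_props[OF sL S0 Sadd SL]
  note PK = ssum_line_props[OF sK S0 Sadd SK]
  have subspSL: "subsp K (ssum S (line L y))" for y
    unfolding subsp_def using PL(1) PL(2) PL(3) KL by blast
  have LclSL: "Lclosed (ssum S (line L y))" for y
    unfolding Lclosed_def using PL(3) by blast
  have subspSK: "subsp K (ssum S (line K y))" for y
    unfolding subsp_def using PK(1) PK(2) PK(3) by blast
  define H where "H = {T. subsp K T \<and> S \<subseteq> T \<and> T \<subseteq> U \<and> card T = q ^ 3}"
  have HD: "T = ssum S (line K y)" if "T \<in> H" "y \<in> T" "y \<notin> S" for T y
  proof -
    have T: "subsp K T" "S \<subseteq> T" "card T = q ^ 3" using that(1) unfolding H_def by auto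
    have sub: "ssum S (line K y) \<subseteq> T"
    proof
      fix x assume "x \<in> ssum S (line K y)"
      then obtain s c where h: "s \<in> S" "c \<in> K" "x = s + c * y" by (rule ssum_lineE)
      have "c * y \<in> T" by (rule subsp_scale[OF T(1) h(2) that(2)])
      thus "x \<in> T" using h T(2) subsp_add[OF T(1)] by blast
    qed
    show ?thesis
      by (rule card_subset_eq[OF fin sub, symmetric]) (simp add: T(3) card_SK[OF that(3)])
  qed
  have HD': "ssum S (line K y) \<in> H" if "y \<in> U" "y \<notin> S" for y
  proof -
    have "ssum S (line K y) \<subseteq> U"
    proof
      fix x assume "x \<in> ssum S (line K y)"
      then obtain s c where h: "s \<in> S" "c \<in> K" "x = s + c * y" by (rule ssum_lineE)
      have "c * y \<in> U" by (rule subsp_scale[OF U(1) h(2) that(1)])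
      thus "x \<in> U" using h SU subsp_add[OF U(1)] by blast
    qed
    thus ?thesis unfolding H_def using subspSK PK(4) card_SK[OF that(2)] by blast
  qed
  have cardH: "card H = q + 1"
  proof -
    define D where "D = (\<lambda>T. T - S) ` H"
    have inj: "inj_on (\<lambda>T. T - S) H"
    proof (rule inj_onI)
      fix T1 T2 assume "T1 \<in> H" "T2 \<in> H" "T1 - S = T2 - S"
      moreover have "S \<subseteq> T1" "S \<subseteq> T2" using \<open>T1 \<in> H\<close> \<open>T2 \<in> H\<close> unfolding H_def by auto
      ultimately show "T1 = T2" by blast
    qed
    have cD: "card d = q ^ 3 - q ^ 2" if dD: "d \<in> D" for d
    proof -
      obtain T where T: "T \<in> H" "d = T - S" using dD unfolding D_def by blast
      have "S \<subseteq> T" "card T = q ^ 3" using T(1) unfolding H_def by auto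
      thus ?thesis using T(2) card_Diff_subset[OF fin \<open>S \<subseteq> T\<close>] cS by simp
    qed
    have disj: "d1 \<inter> d2 = {}" if dd: "d1 \<in> D" "d2 \<in> D" "d1 \<noteq> d2" for d1 d2
    proof (rule ccontr)
      assume "d1 \<inter> d2 \<noteq> {}"
      then obtain y where y: "y \<in> d1" "y \<in> d2" by blast
      obtain T1 T2 where T: "T1 \<in> H" "d1 = T1 - S" "T2 \<in> H" "d2 = T2 - S"
        using dd unfolding D_def by blast
      have "T1 = ssum S (line K y)" using HD[OF T(1)] y T by blast
      moreover have "T2 = ssum S (line K y)" using HD[OF T(3)] y T by blast
      ultimately show False using dd T by simp
    qed
    have UD: "\<Union>D = U - S"
    proof
      show "\<Union>D \<subseteq> U - S" unfolding D_def H_def by blast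
    next
      show "U - S \<subseteq> \<Union>D"
      proof
        fix y assume y: "y \<in> U - S"
        have "ssum S (line K y) \<in> H" using HD' y by blast
        moreover have "y \<in> ssum S (line K y)" using PK(5) line_self[OF sK] by blast
        ultimately show "y \<in> \<Union>D" unfolding D_def using y by blast
      qed
    qed
    have "(q ^ 3 - q ^ 2) * card D = card (\<Union>D)"
      by (rule card_partition) (use cD disj in auto)
    also have "\<dots> = q ^ 4 - q ^ 2" unfolding UD using card_Diff_subset[OF fin SU] U(2) cS by simp
    also have "\<dots> = (q ^ 3 - q ^ 2) * (q + 1)" using ar1[OF q2] by simp
    finally have e: "(q ^ 3 - q ^ 2) * card D = (q ^ 3 - q ^ 2) * (q + 1)" .
    have "q ^ 3 - q ^ 2 > 0" using q_facts by simp
    hence "card D = q + 1" using e by (metis mult_left_cancel not_gr0)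
    moreover have "card D = card H" unfolding D_def by (rule card_image[OF inj])
    ultimately show ?thesis by simp
  qed
  have GL: "Lclosed W" if "W \<in> G" for W
  proof -
    have "subsp K W" "card W = q ^ 4" "cnt W \<ge> 2" using that q_facts(1) unfolding G_def by auto
    thus ?thesis by (rule cnt_ge2_Lclosed)
  qed
  have fwd: "U \<inter> W \<in> H" if W: "W \<in> G" for W
  proof -
    have h: "subsp K W" "subsp K (U \<inter> W)" "card (U \<inter> W) = q ^ 3" using W unfolding G_def by auto
    have "\<exists>z. z \<in> (U \<inter> W) \<inter> S \<and> z \<noteq> 0"
    proof (rule ccontr)
      assume "\<not> ?thesis"
      hence int: "(U \<inter> W) \<inter> S \<subseteq> {0}" by blast
      have "card (ssum (U \<inter> W) S) = q ^ 3 * q ^ 2"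
        using card_ssum[OF subsp_diff'[OF h(2)] Sdiff int] h(3) cS by simp
      hence "card (ssum (U \<inter> W) S) = q ^ 5" by (simp add: power_add[symmetric])
      moreover have "ssum (U \<inter> W) S \<subseteq> U"
      proof
        fix x assume "x \<in> ssum (U \<inter> W) S"
        then obtain a b where "a \<in> U \<inter> W" "b \<in> S" "x = a + b" by (rule ssumE)
        thus "x \<in> U" using SU subsp_add[OF U(1)] by blast
      qed
      hence "card (ssum (U \<inter> W) S) \<le> card U" by (rule card_mono[OF fin])
      ultimately show False using U(2) q_facts(4) by simp
    qed
    then obtain z where z: "z \<in> U \<inter> W" "z \<in> S" "z \<noteq> 0" by blast
    have "line L z = S" using line_eq[of z x0] z x0 by simp
    moreover have "line L z \<subseteq> W" using line_sub[OF GL[OF W]] z by blast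
    ultimately have "S \<subseteq> U \<inter> W" using SU by blast
    thus ?thesis unfolding H_def using h by blast
  qed
  have GC: "W = ssum S (line L y)" if "W \<in> G" "S \<subseteq> W" "y \<in> W" "y \<notin> S" for W y
  proof -
    have h: "subsp K W" "card W = q ^ 4" using that(1) unfolding G_def by auto
    have sub: "ssum S (line L y) \<subseteq> W"
    proof
      fix x assume "x \<in> ssum S (line L y)"
      then obtain s c where hh: "s \<in> S" "c \<in> L" "x = s + c * y" by (rule ssum_lineE)
      have "c * y \<in> W" using GL[OF that(1)] hh(2) that(3) unfolding Lclosed_def by blast
      thus "x \<in> W" using hh that(2) subsp_add[OF h(1)] by blast
    qed
    show ?thesis
      by (rule card_subset_eq[OF fin sub, symmetric]) (simp add: h(2) card_SL[OF that(4)])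
  qed
  have exy: "\<exists>y. y \<in> T \<and> y \<notin> S" if "T \<in> H" for T
  proof (rule ccontr)
    assume "\<not> ?thesis"
    hence "T \<subseteq> S" by blast
    hence "card T \<le> card S" by (rule card_mono[OF fin])
    thus False using that cS q_facts(2) unfolding H_def by simp
  qed
  have inj: "inj_on (\<lambda>W. U \<inter> W) G"
  proof (rule inj_onI)
    fix W1 W2 assume W: "W1 \<in> G" "W2 \<in> G" "U \<inter> W1 = U \<inter> W2"
    obtain y where y: "y \<in> U \<inter> W1" "y \<notin> S" using exy[OF fwd[OF W(1)]] by blast
    have "S \<subseteq> W1" using fwd[OF W(1)] unfolding H_def by blast
    hence "W1 = ssum S (line L y)" using GC[OF W(1)] y by blast
    moreover have "S \<subseteq> W2" using fwd[OF W(2)] unfolding H_def by blast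
    hence "W2 = ssum S (line L y)" using GC[OF W(2)] y W(3) by blast
    ultimately show "W1 = W2" by simp
  qed
  have surj: "T \<in> (\<lambda>W. U \<inter> W) ` G" if T: "T \<in> H" for T
  proof -
    obtain y where y: "y \<in> T" "y \<notin> S" using exy[OF T] by blast
    have TH: "subsp K T" "S \<subseteq> T" "T \<subseteq> U" "card T = q ^ 3" using T unfolding H_def by auto
    define W where "W = ssum S (line L y)"
    have Wp: "subsp K W" "Lclosed W" "card W = q ^ 4"
      unfolding W_def using subspSL LclSL card_SL[OF y(2)] by auto
    have TW: "T \<subseteq> W"
    proof -
      have "T = ssum S (line K y)" by (rule HD[OF T y])
      also have "\<dots> \<subseteq> W" unfolding W_def ssum_def using line_mono[OF KL, of y] by blast
      finally show ?thesis .
    qed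
    have UWT: "U \<inter> W = T"
    proof (rule ccontr)
      assume "U \<inter> W \<noteq> T"
      then obtain z where z: "z \<in> U \<inter> W" "z \<notin> T" using TW TH(3) by blast
      have UWs: "subsp K (U \<inter> W)" by (rule subsp_Int[OF U(1) Wp(1)])
      have int: "T \<inter> line K z \<subseteq> {0}"
      proof
        fix w assume w: "w \<in> T \<inter> line K z"
        then obtain c where c: "c \<in> K" "w = c * z" by (blast elim: lineE)
        show "w \<in> {0}"
        proof (cases "c = 0")
          case True thus ?thesis using c by simp
        next
          case False
          have "inverse c * w \<in> T" using w subsp_scale[OF TH(1) sfD(6)[OF sK c(1)]] by blast
          hence "z \<in> T" using False c by (simp add: mult.assoc[symmetric])
          thus ?thesis using z by blast
        qed
      qed
      have z0: "z \<noteq> 0" using z subsp_0[OF TH(1)] by blast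
      have "card (ssum T (line K z)) = q ^ 3 * q"
        using card_ssum[OF subsp_diff'[OF TH(1)] line_diff[OF sK] int] TH(4) card_lineK[OF z0] by simp
      hence c4: "card (ssum T (line K z)) = q ^ 4" using power_add[of q 3 1] by simp
      have sub: "ssum T (line K z) \<subseteq> U \<inter> W"
      proof
        fix x assume "x \<in> ssum T (line K z)"
        then obtain t c where hh: "t \<in> T" "c \<in> K" "x = t + c * z" by (rule ssum_lineE)
        have "c * z \<in> U \<inter> W" by (rule subsp_scale[OF UWs hh(2) z(1)])
        moreover have "t \<in> U \<inter> W" using hh(1) TW TH(3) by blast
        ultimately show "x \<in> U \<inter> W" using hh subsp_add[OF UWs] by blast
      qed
      have "card (U \<inter> W) \<le> card U" by (rule card_mono[OF fin]) blast
      moreover have "card (ssum T (line K z)) \<le> card (U \<inter> W)" by (rule card_mono[OF fin sub])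
      ultimately have "card (U \<inter> W) = card U" using c4 U(2) by simp
      hence "U \<inter> W = U" by (intro card_subset_eq[OF fin]) auto
      hence "U \<subseteq> W" by blast
      hence "U = W" by (rule card_subset_eq[OF fin]) (simp add: U(2) Wp(3))
      hence "line L y \<subseteq> U" using line_sub[OF Wp(2)] TW y(1) by blast
      hence "line L y = S" using uniq spreadI[OF y0[OF y(2)]] by blast
      thus False using line_self[OF sL, of y] y(2) by blast
    qed
    have "W \<in> G" unfolding G_def using Wp UWT TH(1) TH(4) cnt_Lclosed[OF Wp] by simp
    thus ?thesis using UWT by blast
  qed
  have "(\<lambda>W. U \<inter> W) ` G = H" using fwd surj by blast
  hence "card G = card H" using card_image[OF inj] by simp
  thus ?thesis using cardH unfolding G_def by simp
qed

end

lemma fq_dim_iff: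
  assumes "sfield (Fq q :: 'a::{finite,field} set)" "card (Fq q :: 'a set) = q" "q \<ge> 2"
  shows "fq_subspace_dim q V d \<longleftrightarrow> subsp (Fq q) V \<and> card (V::'a set) = q ^ d"
proof -
  have e1: "fq_indep q = (indepK (Fq q) :: 'a list \<Rightarrow> bool)" by (intro ext) (simp add: fq_indep_def indepK_def)
  have e2: "fq_span q = (spanK (Fq q) :: 'a list \<Rightarrow> 'a set)" by (intro ext) (simp add: fq_span_def spanK_def)
  show ?thesis unfolding fq_subspace_dim_def e1 e2 by (rule dim_iff[OF assms])
qed

theorem lemma6p2:
  fixes q n :: nat and U :: "'a::{finite,field} set"
  assumes "\<exists>p k. prime p \<and> k > 0 \<and> q = p ^ k"
    and "n \<ge> 6" and "even n"
    and "card (UNIV :: 'a set) = q ^ n"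
    and "fq_subspace_dim q U 4"
    and "spread_count q U = 1"
  shows "card {W. grassmann_adj q 4 U W \<and> spread_count q W = q\<^sup>2 + 1} = q + 1"
proof -
  obtain p k where pk: "prime p" "k > 0" "q = p ^ k" using assms(1) by blast
  have n2: "n div 2 > 0" "n = 2 * (n div 2)" using assms(2,3) by auto
  interpret A: ffq p k n q "TYPE('a)"
    by unfold_locales (use pk assms(2,4) in auto)
  have "(q ^ 2) ^ (n div 2) = q ^ (2 * (n div 2))" by (simp only: power_mult)
  hence cq2: "card (UNIV :: 'a set) = (q ^ 2) ^ (n div 2)"
    using assms(4) n2(2) by simp
  have qp2: "q ^ 2 = p ^ (2 * k)" unfolding pk(3) by (simp only: power_mult[symmetric] mult.commute)
  interpret B: ffq p "2 * k" "n div 2" "q ^ 2" "TYPE('a)"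
    by unfold_locales (use pk n2 cq2 qp2 in simp_all)
  have AF: "A.F = (Fq q :: 'a set)" by (simp add: A.F_def Fq_def)
  have BF: "B.F = (Fq2 q :: 'a set)" by (simp add: B.F_def Fq2_def)
  note As = A.F_0 A.F_1 A.F_add A.F_mult A.F_diff A.F_uminus A.F_inverse
  note Bs = B.F_0 B.F_1 B.F_add B.F_mult B.F_diff B.F_uminus B.F_inverse
  have sK: "sfield (Fq q :: 'a set)" unfolding sfield_def
    by (intro conjI ballI As[unfolded AF])
  have sL: "sfield (Fq2 q :: 'a set)" unfolding sfield_def
    by (intro conjI ballI Bs[unfolded BF])
  have KL: "(Fq q :: 'a set) \<subseteq> Fq2 q"
  proof
    fix x :: 'a assume "x \<in> Fq q"
    hence "x ^ q = x" by (simp add: Fq_def)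
    hence "x ^ (q ^ 2) = x" by (simp add: power2_eq_square power_mult)
    thus "x \<in> Fq2 q" by (simp add: Fq2_def)
  qed
  have cK: "card (Fq q :: 'a set) = q" using A.card_F AF by simp
  have cL: "card (Fq2 q :: 'a set) = q ^ 2" using B.card_F BF by simp
  have q2: "q \<ge> 2" by (rule A.Q2)
  interpret G: geo "Fq q :: 'a set" "Fq2 q" q
    by (intro geo.intro sK sL KL cK cL q2)
  have dim: "fq_subspace_dim q V d \<longleftrightarrow> subsp (Fq q) V \<and> card V = q ^ d" for V :: "'a set" and d
    by (rule fq_dim_iff[OF sK cK q2])
  have sp: "(desarg_spread q :: 'a set set) = G.spreadL" by (simp add: desarg_spread_def G.spreadL_def line_def)
  have cnt: "spread_count q W = G.cnt W" for W :: "'a set"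
    by (simp add: spread_count_def G.cnt_def sp)
  have "{W. grassmann_adj q 4 U W \<and> spread_count q W = q\<^sup>2 + 1} =
    {W. (subsp (Fq q) W \<and> card W = q ^ 4) \<and> (subsp (Fq q) (U \<inter> W) \<and> card (U \<inter> W) = q ^ 3)
                 \<and> G.cnt W = q ^ 2 + 1}"
  proof (intro Collect_cong)
    fix W :: "'a set"
    have "grassmann_adj q 4 U W \<longleftrightarrow> fq_subspace_dim q W 4 \<and> fq_subspace_dim q (U \<inter> W) 3"
      using assms(5) by (simp add: grassmann_adj_def)
    thus "(grassmann_adj q 4 U W \<and> spread_count q W = q\<^sup>2 + 1) \<longleftrightarrow>
      ((subsp (Fq q) W \<and> card W = q ^ 4) \<and> (subsp (Fq q) (U \<inter> W) \<and> card (U \<inter> W) = q ^ 3)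
                 \<and> G.cnt W = q ^ 2 + 1)" by (simp only: dim cnt conj_assoc)
  qed
  also have "card \<dots> = q + 1"
    by (rule G.main_count) (use assms(5,6) in \<open>simp_all add: dim cnt\<close>)
  finally show ?thesis .
qed


end
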